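(* Let $G$ and $H$ be finite simple connected graphs of order at least $3$. If the direct product $G \times H$ is well-dominated, then $\gamma(G \times H)=\gamma(G)\,n(H)=\gamma(H)\,n(G)$. Furthermore, $\gamma(G)=\alpha(G)$ and $\gamma(H)=\alpha(H)$.
   Context: $n(X)$ is the order of $X$; $\gamma(X)$ is the domination number (minimum size of a dominating set) and $\alpha(X)$ is the independence number (maximum size of an independent set). A graph is well-dominated if every minimal dominating set is a minimum dominating set. The direct product $G\times H$ has vertex set $V(G)\times V(H)$, with $(g_1,h_1)$ adjacent to $(g_2,h_2)$ iff $g_1g_2\in E(G)$ and $h_1h_2\in E(H)$. *)

theory Defs
  imports Main
begin

definition fin_simple_graph :: "'a set \<Rightarrow> ('a \<Rightarrow> 'a \<Rightarrow> bool) \<Rightarrow> bool" where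
  "fin_simple_graph V E \<longleftrightarrow> finite V \<and> (\<forall>x y. E x y \<longrightarrow> x \<in> V \<and> y \<in> V)
     \<and> (\<forall>x y. E x y \<longrightarrow> E y x) \<and> (\<forall>x. \<not> E x x)"

definition graph_connected :: "'a set \<Rightarrow> ('a \<Rightarrow> 'a \<Rightarrow> bool) \<Rightarrow> bool" where
  "graph_connected V E \<longleftrightarrow> V \<noteq> {} \<and> (\<forall>x\<in>V. \<forall>y\<in>V. (x, y) \<in> {(u, v). E u v}\<^sup>*)"

definition dominating :: "'a set \<Rightarrow> ('a \<Rightarrow> 'a \<Rightarrow> bool) \<Rightarrow> 'a set \<Rightarrow> bool" where
  "dominating V E D \<longleftrightarrow> D \<subseteq> V \<and> (\<forall>v\<in>V. v \<in> D \<or> (\<exists>d\<in>D. E v d))"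

definition independent :: "'a set \<Rightarrow> ('a \<Rightarrow> 'a \<Rightarrow> bool) \<Rightarrow> 'a set \<Rightarrow> bool" where
  "independent V E S \<longleftrightarrow> S \<subseteq> V \<and> (\<forall>x\<in>S. \<forall>y\<in>S. \<not> E x y)"

definition domination_number :: "'a set \<Rightarrow> ('a \<Rightarrow> 'a \<Rightarrow> bool) \<Rightarrow> nat" where
  "domination_number V E = (LEAST k. \<exists>D. dominating V E D \<and> card D = k)"

definition independence_number :: "'a set \<Rightarrow> ('a \<Rightarrow> 'a \<Rightarrow> bool) \<Rightarrow> nat" where
  "independence_number V E = (GREATEST k. \<exists>S. independent V E S \<and> card S = k)"

definition minimal_dominating :: "'a set \<Rightarrow> ('a \<Rightarrow> 'a \<Rightarrow> bool) \<Rightarrow> 'a set \<Rightarrow> bool" where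
  "minimal_dominating V E D \<longleftrightarrow> dominating V E D \<and> (\<forall>D'. D' \<subset> D \<longrightarrow> \<not> dominating V E D')"

definition well_dominated :: "'a set \<Rightarrow> ('a \<Rightarrow> 'a \<Rightarrow> bool) \<Rightarrow> bool" where
  "well_dominated V E \<longleftrightarrow>
     (\<forall>D. minimal_dominating V E D \<longrightarrow> card D = domination_number V E)"

definition direct_prod_edges ::
  "('a \<Rightarrow> 'a \<Rightarrow> bool) \<Rightarrow> ('b \<Rightarrow> 'b \<Rightarrow> bool) \<Rightarrow> ('a \<times> 'b) \<Rightarrow> ('a \<times> 'b) \<Rightarrow> bool" where
  "direct_prod_edges E F p q \<longleftrightarrow> E (fst p) (fst q) \<and> F (snd p) (snd q)"

end

theory Submission
  imports Defs
begin

lemma dn_le: "dominating V E D \<Longrightarrow> domination_number V E \<le> card D"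
  unfolding domination_number_def by (rule Least_le) blast

lemma dn_ex: "fin_simple_graph V E \<Longrightarrow> \<exists>D. dominating V E D \<and> card D = domination_number V E"
  unfolding domination_number_def
  by (rule LeastI_ex) (auto simp: dominating_def)

lemma noiso:
  assumes "fin_simple_graph V E" "graph_connected V E" "card V \<ge> 3" "v \<in> V"
  shows "\<exists>u. E v u"
proof -
  have "\<exists>w\<in>V. w \<noteq> v"
  proof (rule ccontr)
    assume "\<not> ?thesis"
    then have "V \<subseteq> {v}" by auto
    then have "card V \<le> 1" using assms(1) unfolding fin_simple_graph_def
      using card_mono[of "{v}" V] by simp
    then show False using assms(3) by simp
  qed
  then obtain w where w: "w \<in> V" "w \<noteq> v" by blast
  have "(v, w) \<in> {(u, v). E u v}\<^sup>*" using assms(2,4) w unfolding graph_connected_def by blast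
  then show ?thesis using w(2)
    by (cases rule: converse_rtranclE) auto
qed

lemma max_indep:
  assumes "fin_simple_graph V E" "independent V E S"
  shows "\<exists>I. S \<subseteq> I \<and> independent V E I \<and> (\<forall>x\<in>V-I. \<exists>i\<in>I. E x i)"
proof -
  let ?F = "{T. S \<subseteq> T \<and> independent V E T}"
  have fin: "finite ?F"
    by (rule finite_subset[of _ "Pow V"]) (use assms(1) in \<open>auto simp: independent_def fin_simple_graph_def\<close>)
  have ne: "?F \<noteq> {}" using assms(2) by blast
  obtain I where I: "I \<in> ?F" "\<forall>b\<in>?F. I \<subseteq> b \<longrightarrow> I = b"
    using finite_has_maximal[OF fin ne] by blast
  have "\<exists>i\<in>I. E x i" if x: "x \<in> V - I" for x
  proof (rule ccontr)
    assume n: "\<not> ?thesis"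
    have "independent V E (insert x I)"
      using I(1) x n assms(1) unfolding independent_def fin_simple_graph_def by blast
    then have "insert x I \<in> ?F" using I(1) by blast
    then show False using I(2) x by blast
  qed
  then show ?thesis using I(1) by blast
qed

lemma maxind_dom: "independent V E I \<Longrightarrow> (\<forall>x\<in>V-I. \<exists>i\<in>I. E x i) \<Longrightarrow> dominating V E I"
  unfolding independent_def dominating_def by blast

lemma prodG_dom:
  assumes "\<forall>h\<in>VH. \<exists>h'. EH h h'" "fin_simple_graph VH EH" "dominating VG EG D"
  shows "dominating (VG \<times> VH) (direct_prod_edges EG EH) (D \<times> VH)"
  using assms unfolding dominating_def direct_prod_edges_def fin_simple_graph_def
  by fastforce

lemma prodH_dom:
  assumes "\<forall>g\<in>VG. \<exists>g'. EG g g'" "fin_simple_graph VG EG" "dominating VH EH D"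
  shows "dominating (VG \<times> VH) (direct_prod_edges EG EH) (VG \<times> D)"
  using assms unfolding dominating_def direct_prod_edges_def fin_simple_graph_def
  by fastforce

lemma prodG_min:
  assumes "\<forall>h\<in>VH. \<exists>h'. EH h h'" "fin_simple_graph VH EH"
    "independent VG EG I" "\<forall>x\<in>VG-I. \<exists>i\<in>I. EG x i"
  shows "minimal_dominating (VG \<times> VH) (direct_prod_edges EG EH) (I \<times> VH)"
  unfolding minimal_dominating_def
proof (intro conjI allI impI)
  show "dominating (VG \<times> VH) (direct_prod_edges EG EH) (I \<times> VH)"
    using prodG_dom[OF assms(1,2) maxind_dom[OF assms(3,4)]] .
  fix D' assume D': "D' \<subset> I \<times> VH"
  then obtain p where p: "p \<in> I \<times> VH" "p \<notin> D'" by blast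
  show "\<not> dominating (VG \<times> VH) (direct_prod_edges EG EH) D'"
  proof
    assume "dominating (VG \<times> VH) (direct_prod_edges EG EH) D'"
    then obtain d where "d \<in> D'" "direct_prod_edges EG EH p d"
      using p assms(3) unfolding dominating_def independent_def by blast
    then show False using D' p assms(3) unfolding direct_prod_edges_def independent_def by auto
  qed
qed

lemma prodH_min:
  assumes "\<forall>g\<in>VG. \<exists>g'. EG g g'" "fin_simple_graph VG EG"
    "independent VH EH I" "\<forall>x\<in>VH-I. \<exists>i\<in>I. EH x i"
  shows "minimal_dominating (VG \<times> VH) (direct_prod_edges EG EH) (VG \<times> I)"
  unfolding minimal_dominating_def
proof (intro conjI allI impI)
  show "dominating (VG \<times> VH) (direct_prod_edges EG EH) (VG \<times> I)"
    using prodH_dom[OF assms(1,2) maxind_dom[OF assms(3,4)]] .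
  fix D' assume D': "D' \<subset> VG \<times> I"
  then obtain p where p: "p \<in> VG \<times> I" "p \<notin> D'" by blast
  show "\<not> dominating (VG \<times> VH) (direct_prod_edges EG EH) D'"
  proof
    assume "dominating (VG \<times> VH) (direct_prod_edges EG EH) D'"
    then obtain d where "d \<in> D'" "direct_prod_edges EG EH p d"
      using p assms(3) unfolding dominating_def independent_def by blast
    then show False using D' p assms(3) unfolding direct_prod_edges_def independent_def by auto
  qed
qed

lemma core:
  assumes fs: "fin_simple_graph V E" and nH: "n > 0"
    and mx: "\<And>I. independent V E I \<Longrightarrow> (\<forall>x\<in>V-I. \<exists>i\<in>I. E x i) \<Longrightarrow> card I * n = c"
    and dm: "\<And>D. dominating V E D \<Longrightarrow> c \<le> card D * n"
  shows "c = domination_number V E * n \<and> domination_number V E = independence_number V E"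
proof -
  have fV: "finite V" using fs unfolding fin_simple_graph_def by blast
  have e: "independent V E {}" unfolding independent_def by blast
  obtain I0 where I0: "independent V E I0" "\<forall>x\<in>V-I0. \<exists>i\<in>I0. E x i"
    using max_indep[OF fs e] by blast
  define a where "a = card I0"
  have ca: "c = a * n" using mx[OF I0] a_def by simp
  have le: "card S \<le> a" if S: "independent V E S" for S
  proof -
    obtain I where I: "S \<subseteq> I" "independent V E I" "\<forall>x\<in>V-I. \<exists>i\<in>I. E x i"
      using max_indep[OF fs S] by blast
    have "finite I" using I(2) fV unfolding independent_def using finite_subset by blast
    then have "card S \<le> card I" using I(1) card_mono by blast
    moreover have "card I * n = a * n" using mx[OF I(2,3)] ca by simp
    then have "card I = a" using nH by simp
    ultimately show ?thesis by simp
  qed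
  have alpha: "independence_number V E = a"
    unfolding independence_number_def
    by (rule Greatest_equality) (use I0 a_def le in auto)
  have g1: "domination_number V E \<le> a"
    using dn_le[OF maxind_dom[OF I0]] a_def by simp
  obtain D where D: "dominating V E D" "card D = domination_number V E"
    using dn_ex[OF fs] by blast
  have "a * n \<le> domination_number V E * n" using dm[OF D(1)] D(2) ca by simp
  then have "a \<le> domination_number V E" using nH by simp
  with g1 alpha ca show ?thesis by simp
qed

theorem lemma10:
  fixes VG :: "'a set" and EG :: "'a \<Rightarrow> 'a \<Rightarrow> bool"
    and VH :: "'b set" and EH :: "'b \<Rightarrow> 'b \<Rightarrow> bool"
  assumes "fin_simple_graph VG EG" and "graph_connected VG EG" and "card VG \<ge> 3"
    and "fin_simple_graph VH EH" and "graph_connected VH EH" and "card VH \<ge> 3"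
    and "well_dominated (VG \<times> VH) (direct_prod_edges EG EH)"
  shows "domination_number (VG \<times> VH) (direct_prod_edges EG EH)
           = domination_number VG EG * card VH
       \<and> domination_number VG EG * card VH = domination_number VH EH * card VG
       \<and> domination_number VG EG = independence_number VG EG
       \<and> domination_number VH EH = independence_number VH EH"
proof -
  let ?c = "domination_number (VG \<times> VH) (direct_prod_edges EG EH)"
  have niG: "\<forall>g\<in>VG. \<exists>g'. EG g g'" using noiso[OF assms(1-3)] by blast
  have niH: "\<forall>h\<in>VH. \<exists>h'. EH h h'" using noiso[OF assms(4-6)] by blast
  have fG: "finite VG" and fH: "finite VH"
    using assms(1,4) unfolding fin_simple_graph_def by blast+
  have nG: "card VG > 0" and nH: "card VH > 0" using assms(3,6) by auto
  have wd: "\<And>D. minimal_dominating (VG \<times> VH) (direct_prod_edges EG EH) D \<Longrightarrow> card D = ?c"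
    using assms(7) unfolding well_dominated_def by blast
  have A: "?c = domination_number VG EG * card VH \<and> domination_number VG EG = independence_number VG EG"
  proof (rule core[OF assms(1) nH])
    fix I assume "independent VG EG I" "\<forall>x\<in>VG-I. \<exists>i\<in>I. EG x i"
    from wd[OF prodG_min[OF niH assms(4) this]] show "card I * card VH = ?c"
      by (simp add: card_cartesian_product)
  next
    fix D assume "dominating VG EG D"
    from dn_le[OF prodG_dom[OF niH assms(4) this]] show "?c \<le> card D * card VH"
      by (simp add: card_cartesian_product)
  qed
  have B: "?c = domination_number VH EH * card VG \<and> domination_number VH EH = independence_number VH EH"
  proof (rule core[OF assms(4) nG])
    fix I assume "independent VH EH I" "\<forall>x\<in>VH-I. \<exists>i\<in>I. EH x i"
    from wd[OF prodH_min[OF niG assms(1) this]] show "card I * card VG = ?c"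
      by (simp add: card_cartesian_product mult.commute)
  next
    fix D assume "dominating VH EH D"
    from dn_le[OF prodH_dom[OF niG assms(1) this]] show "?c \<le> card D * card VG"
      by (simp add: card_cartesian_product mult.commute)
  qed
  from A B show ?thesis by simp
qed

end
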